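(* Let $A_1,\dots,A_k$ be $2\times2$ real matrices with all entries strictly positive and norm $<1$, $d_i\in\mathbb R^2$, $T_i(x)=A_ix+d_i$, with $T_i(D)\subset D$ for all $i$ ($D$ the closed unit disc), and let $\mu$ be a Bernoulli measure on $\Sigma=\{1,\dots,k\}^{\mathbb N}$. Let $\lambda_{\max}=\max\{|j|_{\theta}: j\in\{1,\dots,k\},\ \theta\in\mathbb{PR}^1\}$. Then for all $\underline a\in\Sigma$, all $i,N\in\mathbb N$ and all $\theta\in\mathbb{PR}^1$, \[ H_{2^{-(i+1)N}}\big(\pi_\theta(\mu_{[a_1\cdots a_{n_i}]})\big)\ \ge\ H_{2^{\lambda_{\max}}2^{-N}}\big(\pi_{\phi_{a_{n_i}\cdots a_1}(\theta)}(\mu)\big), \] where $n_i=n_i(\underline a,N,\theta)$.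
   Context: Cylinders $[a_1\cdots a_n]\subset\Sigma$ are sets of sequences beginning with $a_1\cdots a_n$; a Bernoulli measure is a product measure $p^{\mathbb N}$, and $\mu_{[w]}=\mu|_{[w]}/\mu([w])$. For $w=a_1\cdots a_n$, $D_w=T_{a_1}\circ\cdots\circ T_{a_n}(D)$, and the coding map $\Pi:\Sigma\to D$ sends $\underline a$ to $\bigcap_nD_{a_1\cdots a_n}$. For $\theta\in\mathbb{PR}^1$ (lines through the origin), $\pi_\theta$ is orthogonal projection of $D$ onto the diameter of $D$ perpendicular to $\theta$, identified isometrically with $[-1,1]$; $\pi_\theta(\nu)$ denotes push-forward of a measure $\nu$ on $\Sigma$ under $\pi_\theta\circ\Pi$. For each $j$, $\phi_j:\mathbb{PR}^1\to\mathbb{PR}^1$ sends a line $\ell$ to $A_j^{-1}(\ell)$, and $\phi_{a_n\cdots a_1}=\phi_{a_n}\circ\cdots\circ\phi_{a_1}$. The length function is $|w|_\theta=-\log_2(|\pi_\theta(D_w)|/2)$. For $\underline a\in\Sigma$, $N,j\in\mathbb N$, $n_j=n_j(\underline a,N,\theta)$ is the natural number with $|a_1\cdots a_{n_j-1}|_\theta<Nj\le|a_1\cdots a_{n_j}|_\theta$. For a probability measure $\nu$ on $[-1,1]$ and $r>0$, $H_r(\nu)=-\int\log\nu(B_r(x))\,d\nu(x)$. *)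

theory Defs
  imports "HOL-Probability.Probability"
begin

(* Alphabet {1,...,k} is modelled by a finite type 'a; Sigma = nat => 'a, a_1 = a 0.
   A line theta through the origin (element of PR^1) is represented by any nonzero
   vector v :: real^2 spanning it. *)

definition unit_disc :: "(real^2) set" where
  "unit_disc = cball 0 1"

definition word :: "(nat \<Rightarrow> 'a) \<Rightarrow> nat \<Rightarrow> 'a list" where
  "word a n = map a [0..<n]"

definition cylinder :: "'a list \<Rightarrow> (nat \<Rightarrow> 'a) set" where
  "cylinder w = {b. \<forall>i<length w. b i = w ! i}"

definition Tmap :: "('a \<Rightarrow> real^2^2) \<Rightarrow> ('a \<Rightarrow> real^2) \<Rightarrow> 'a \<Rightarrow> real^2 \<Rightarrow> real^2" where
  "Tmap A d j x = A j *v x + d j"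

definition Dw :: "('a \<Rightarrow> real^2^2) \<Rightarrow> ('a \<Rightarrow> real^2) \<Rightarrow> 'a list \<Rightarrow> (real^2) set" where
  "Dw A d w = foldr (\<lambda>j S. Tmap A d j ` S) w unit_disc"

definition coding :: "('a \<Rightarrow> real^2^2) \<Rightarrow> ('a \<Rightarrow> real^2) \<Rightarrow> (nat \<Rightarrow> 'a) \<Rightarrow> real^2" where
  "coding A d a = (THE x. x \<in> (\<Inter>n. Dw A d (word a n)))"

definition perp_unit :: "real^2 \<Rightarrow> real^2" where
  "perp_unit v = (1 / norm v) *\<^sub>R vector [- (v $ 2), v $ 1]"

(* pi_theta: orthogonal projection onto the diameter perpendicular to theta = span v,
   identified isometrically with [-1,1] *)
definition proj :: "real^2 \<Rightarrow> real^2 \<Rightarrow> real" where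
  "proj v x = x \<bullet> perp_unit v"

definition wlen :: "('a \<Rightarrow> real^2^2) \<Rightarrow> ('a \<Rightarrow> real^2) \<Rightarrow> real^2 \<Rightarrow> 'a list \<Rightarrow> real" where
  "wlen A d v w = - log 2 (diameter (proj v ` Dw A d w) / 2)"

definition phi :: "('a \<Rightarrow> real^2^2) \<Rightarrow> 'a \<Rightarrow> real^2 \<Rightarrow> real^2" where
  "phi A j v = matrix_inv (A j) *v v"

(* phi_{a_n ... a_1} = phi_{a_n} o ... o phi_{a_1}, applied to word [a_1,...,a_n] *)
definition phiw :: "('a \<Rightarrow> real^2^2) \<Rightarrow> 'a list \<Rightarrow> real^2 \<Rightarrow> real^2" where
  "phiw A w v = fold (phi A) w v"

definition nidx :: "('a \<Rightarrow> real^2^2) \<Rightarrow> ('a \<Rightarrow> real^2) \<Rightarrow> (nat \<Rightarrow> 'a) \<Rightarrow> nat \<Rightarrow> real^2 \<Rightarrow> nat \<Rightarrow> nat" where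
  "nidx A d a N v j = (LEAST n. real (N * j) \<le> wlen A d v (word a n))"

definition Hr :: "real \<Rightarrow> real measure \<Rightarrow> real" where
  "Hr r \<nu> = - (\<integral>x. ln (measure \<nu> (ball x r)) \<partial>\<nu>)"

definition proj_meas :: "('a \<Rightarrow> real^2^2) \<Rightarrow> ('a \<Rightarrow> real^2) \<Rightarrow> real^2 \<Rightarrow> (nat \<Rightarrow> 'a) measure \<Rightarrow> real measure" where
  "proj_meas A d v \<nu> = distr \<nu> borel (\<lambda>a. proj v (coding A d a))"

definition bernoulli :: "'a pmf \<Rightarrow> (nat \<Rightarrow> 'a) measure" where
  "bernoulli p = PiM UNIV (\<lambda>_. measure_pmf p)"

definition lambda_max :: "('a \<Rightarrow> real^2^2) \<Rightarrow> ('a \<Rightarrow> real^2) \<Rightarrow> real" where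
  "lambda_max A d = Sup {wlen A d v [j] | j v. v \<noteq> 0}"

end

theory Submission
  imports Defs
begin

declare transpose_matrix_vector[simp del]

definition Aw :: "('a \<Rightarrow> real^2^2) \<Rightarrow> 'a list \<Rightarrow> real^2^2" where
  "Aw A w = foldr (\<lambda>j M. A j ** M) w (mat 1)"

definition dw :: "('a \<Rightarrow> real^2^2) \<Rightarrow> ('a \<Rightarrow> real^2) \<Rightarrow> 'a list \<Rightarrow> real^2" where
  "dw A d w = foldr (\<lambda>j c. A j *v c + d j) w 0"

lemma Aw_simps[simp]: "Aw A [] = mat 1" "Aw A (j # w) = A j ** Aw A w"
  by (simp_all add: Aw_def)

lemma dw_simps[simp]: "dw A d [] = 0" "dw A d (j # w) = A j *v dw A d w + d j"
  by (simp_all add: dw_def)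

lemma Aw_single[simp]: "Aw A [j] = A j"
  by (simp add: matrix_mul_rid)

lemma Aw_append: "Aw A (xs @ ys) = Aw A xs ** Aw A ys"
  by (induction xs) (simp_all add: matrix_mul_assoc)

lemma foldr_Tmap:
  "foldr (\<lambda>j S. Tmap A d j ` S) w S = (\<lambda>x. Aw A w *v x + dw A d w) ` S"
proof (induction w)
  case Nil then show ?case by simp
next
  case (Cons j w)
  have "foldr (\<lambda>j S. Tmap A d j ` S) (j # w) S = Tmap A d j ` foldr (\<lambda>j S. Tmap A d j ` S) w S"
    by simp
  also have "\<dots> = Tmap A d j ` (\<lambda>x. Aw A w *v x + dw A d w) ` S" by (simp only: Cons)
  also have "\<dots> = (\<lambda>x. Aw A (j # w) *v x + dw A d (j # w)) ` S"
    by (simp add: image_image Tmap_def matrix_vector_right_distrib matrix_vector_mul_assoc add.assoc)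
  finally show ?case .
qed

lemma Dw_eq: "Dw A d w = (\<lambda>x. Aw A w *v x + dw A d w) ` unit_disc"
  by (simp add: Dw_def foldr_Tmap)

lemma Dw_append: "Dw A d (xs @ ys) = (\<lambda>x. Aw A xs *v x + dw A d xs) ` Dw A d ys"
  unfolding Dw_def foldr_append o_apply by (rule foldr_Tmap)

lemma inner_mv_transpose:
  fixes M :: "real^2^2"
  shows "(M *v x) \<bullet> y = x \<bullet> (Finite_Cartesian_Product.transpose M *v y)"
  by (simp add: inner_vec_def matrix_vector_mult_def transpose_def sum_2 algebra_simps)

lemma matrix_inv_right': "invertible M \<Longrightarrow> M ** matrix_inv M = mat 1"
  by (metis (mono_tags, lifting) invertible_def matrix_inv_def someI_ex)

lemma phiw_cons: "phiw A (j # w) v = phiw A w (phi A j v)"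
  by (simp add: phiw_def)

lemma Aw_phiw:
  assumes inv: "\<And>j. invertible (A j)"
  shows "Aw A w *v phiw A w v = v"
proof (induction w arbitrary: v)
  case Nil then show ?case by (simp add: phiw_def)
next
  case (Cons j w)
  have "Aw A (j # w) *v phiw A (j # w) v = A j *v (Aw A w *v phiw A w (phi A j v))"
    by (simp add: phiw_cons matrix_vector_mul_assoc)
  also have "\<dots> = A j *v phi A j v" using Cons by simp
  also have "\<dots> = v" by (simp add: phi_def matrix_vector_mul_assoc matrix_inv_right'[OF inv])
  finally show ?case .
qed

lemma norm_vec2: "norm (x::real^2) = sqrt ((x$1)^2 + (x$2)^2)"
  by (simp add: norm_vec_def L2_set_def sum_2)

lemma inner_vec2: "(x::real^2) \<bullet> y = x$1 * y$1 + x$2 * y$2"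
  by (simp add: inner_vec_def sum_2)

lemma perp_unit_comp: "perp_unit v $ 1 = - (v$2) / norm v" "perp_unit v $ 2 = v$1 / norm v"
  by (simp_all add: perp_unit_def)

lemma norm_perp_unit: "v \<noteq> 0 \<Longrightarrow> norm (perp_unit v) = 1"
proof -
  assume v: "v \<noteq> 0"
  have n: "norm v > 0" using v by simp
  have "norm (perp_unit v) = sqrt (((v$2)^2 + (v$1)^2) / (norm v)^2)"
    by (simp add: norm_vec2 perp_unit_comp power_divide add_divide_distrib)
  also have "(v$2)^2 + (v$1)^2 = (norm v)^2" by (simp add: norm_vec2)
  finally show ?thesis using n by simp
qed

lemma perp_unit_orth: "perp_unit v \<bullet> v = 0"
  by (simp add: inner_vec2 perp_unit_comp field_simps)

lemma orth_2d:
  fixes y z :: "real^2"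
  assumes "z \<noteq> 0" "y \<bullet> z = 0"
  shows "y = (y \<bullet> perp_unit z) *\<^sub>R perp_unit z"
proof -
  have n: "(norm z)^2 = (z$1)^2 + (z$2)^2" by (simp add: norm_vec2)
  have nz: "norm z \<noteq> 0" using assms by simp
  have e: "y$1 * z$1 + y$2 * z$2 = 0" using assms(2) by (simp add: inner_vec2)
  have d: "z$1*z$1 + z$2*z$2 \<noteq> 0" using nz n by (metis power2_eq_square zero_eq_power2)
  have n': "norm z * norm z = z$1*z$1 + z$2*z$2" using n by (simp add: power2_eq_square)
  have h1: "y$1 = (y$1 * (-(z$2)/norm z) + y$2 * (z$1/norm z)) * (-(z$2)/norm z)"
  proof -
    have a: "(y$1 * (-(z$2)/norm z) + y$2 * (z$1/norm z)) * (-(z$2)/norm z)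
       = (y$1*z$2*z$2 - y$2*z$1*z$2) / (norm z * norm z)" using nz by (simp add: field_simps)
    have b: "y$1*z$2*z$2 - y$2*z$1*z$2 = y$1 * (norm z * norm z)" using e n' by algebra
    show ?thesis unfolding a b using nz by simp
  qed
  have h2: "y$2 = (y$1 * (-(z$2)/norm z) + y$2 * (z$1/norm z)) * (z$1/norm z)"
  proof -
    have a: "(y$1 * (-(z$2)/norm z) + y$2 * (z$1/norm z)) * (z$1/norm z)
       = (y$2*z$1*z$1 - y$1*z$1*z$2) / (norm z * norm z)" using nz by (simp add: field_simps)
    have b: "y$2*z$1*z$1 - y$1*z$1*z$2 = y$2 * (norm z * norm z)" using e n' by algebra
    show ?thesis unfolding a b using nz by simp
  qed
  show ?thesis
    unfolding vec_eq_iff forall_2 vector_scaleR_component inner_vec2 perp_unit_comp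
    using h1 h2 by simp
qed


section \<open>Projections and lengths\<close>

abbreviation TT :: "('a \<Rightarrow> real^2^2) \<Rightarrow> 'a list \<Rightarrow> real^2 \<Rightarrow> real^2" where
  "TT A w u \<equiv> Finite_Cartesian_Product.transpose (Aw A w) *v u"

lemma proj_affine:
  fixes M :: "real^2^2"
  shows "proj v (M *v x + c) = x \<bullet> (Finite_Cartesian_Product.transpose M *v perp_unit v) + c \<bullet> perp_unit v"
  by (simp only: proj_def inner_add_left inner_mv_transpose)

lemma image_inner_cball:
  fixes z :: "real^2"
  shows "(\<lambda>x. x \<bullet> z + c) ` cball 0 1 = {c - norm z .. c + norm z}"
proof
  show "(\<lambda>x. x \<bullet> z + c) ` cball 0 1 \<subseteq> {c - norm z .. c + norm z}"
  proof
    fix t assume "t \<in> (\<lambda>x. x \<bullet> z + c) ` cball 0 1"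
    then obtain x where x: "norm x \<le> 1" "t = x \<bullet> z + c" by auto
    have "\<bar>x \<bullet> z\<bar> \<le> norm x * norm z" by (rule Cauchy_Schwarz_ineq2)
    also have "\<dots> \<le> norm z" using x(1) by (simp add: mult_left_le_one_le)
    finally show "t \<in> {c - norm z .. c + norm z}" using x(2) by auto
  qed
next
  show "{c - norm z .. c + norm z} \<subseteq> (\<lambda>x. x \<bullet> z + c) ` cball 0 1"
  proof
    fix t assume t: "t \<in> {c - norm z .. c + norm z}"
    show "t \<in> (\<lambda>x. x \<bullet> z + c) ` cball 0 1"
    proof (cases "z = 0")
      case True
      then have "t = 0 \<bullet> z + c" using t by simp
      moreover have "(0::real^2) \<in> cball 0 1" by simp
      ultimately show ?thesis by (metis rev_image_eqI)
    next
      case False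
      then have nz: "norm z > 0" by simp
      define x where "x = ((t - c) / (norm z)^2) *\<^sub>R z"
      have "x \<bullet> z = t - c" using nz by (simp add: x_def power2_norm_eq_inner[symmetric])
      moreover have "norm x \<le> 1"
      proof -
        have "norm x = \<bar>t - c\<bar> / norm z" using nz by (simp add: x_def power2_eq_square)
        also have "\<dots> \<le> 1" using t nz by (simp add: divide_le_eq_1 abs_le_iff)
        finally show ?thesis .
      qed
      ultimately have "t = x \<bullet> z + c" "x \<in> cball 0 1" by auto
      then show ?thesis by blast
    qed
  qed
qed

lemma diam_proj_Dw:
  "diameter (proj v ` Dw A d w) = 2 * norm (TT A w (perp_unit v))"
proof -
  have "proj v ` Dw A d w = (\<lambda>x. x \<bullet> TT A w (perp_unit v) + dw A d w \<bullet> perp_unit v) ` cball 0 1"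
    by (simp add: Dw_eq image_image proj_affine unit_disc_def)
  also have "\<dots> = {dw A d w \<bullet> perp_unit v - norm (TT A w (perp_unit v)) ..
                    dw A d w \<bullet> perp_unit v + norm (TT A w (perp_unit v))}"
    by (rule image_inner_cball)
  finally show ?thesis by (simp add: diameter_closed_interval)
qed

lemma wlen_eq: "wlen A d v w = - log 2 (norm (TT A w (perp_unit v)))"
  by (simp add: wlen_def diam_proj_Dw)

lemma one_le_phiw_TT:
  assumes inv: "\<And>j. invertible (A j)" and u: "norm u = 1"
  shows "1 \<le> norm (phiw A w u) * norm (TT A w u)"
proof -
  have "1 = u \<bullet> u" using u by (simp add: power2_norm_eq_inner[symmetric])
  also have "\<dots> = (Aw A w *v phiw A w u) \<bullet> u" using Aw_phiw[where A=A, OF inv] by simp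
  also have "\<dots> = phiw A w u \<bullet> TT A w u" by (rule inner_mv_transpose)
  also have "\<dots> \<le> norm (phiw A w u) * norm (TT A w u)" by (rule norm_cauchy_schwarz)
  finally show ?thesis .
qed

lemma TT_nonzero:
  assumes inv: "\<And>j. invertible (A j)" and u: "norm u = 1"
  shows "TT A w u \<noteq> 0"
  using one_le_phiw_TT[where A=A and w=w, OF inv u] by auto

lemma TT_single_nonzero:
  fixes A :: "'a \<Rightarrow> real^2^2"
  assumes inv: "\<And>j. invertible (A j)" and u: "norm u = 1"
  shows "Finite_Cartesian_Product.transpose (A j) *v u \<noteq> 0"
  using TT_nonzero[where A=A and w="[j]", OF inv u] by simp


lemma neg_log_le:
  assumes "x > 0" "1 \<le> K * x"
  shows "- log 2 x \<le> log 2 K"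
proof -
  have K: "K > 0" using assms by (smt (verit) mult_nonpos_nonneg)
  have "1 / x \<le> K" using assms by (simp add: divide_le_eq)
  then have "log 2 (1/x) \<le> log 2 K" using assms K by (simp add: log_le_cancel_iff)
  moreover have "log 2 (1/x) = - log 2 x" using assms by (simp add: log_divide)
  ultimately show ?thesis by simp
qed

lemma lambda_bdd:
  fixes A :: "'a::finite \<Rightarrow> real^2^2"
  assumes inv: "\<And>j. invertible (A j)"
  shows "bdd_above {wlen A d v [j] | j v. v \<noteq> 0}"
proof -
  define K where "K j = onorm ((*v) (matrix_inv (A j)))" for j
  have "wlen A d v [j] \<le> (\<Sum>i\<in>UNIV. \<bar>log 2 (K i)\<bar>)" if v: "v \<noteq> 0" for v j
  proof -
    let ?u = "perp_unit v"
    have u: "norm ?u = 1" using v by (rule norm_perp_unit)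
    have "1 \<le> norm (phiw A [j] ?u) * norm (TT A [j] ?u)"
      by (rule one_le_phiw_TT[where A=A, OF inv u])
    also have "norm (phiw A [j] ?u) \<le> K j"
      using onorm[OF matrix_vector_mul_bounded_linear, of "matrix_inv (A j)" ?u] u
      by (simp add: phiw_def phi_def K_def)
    then have "norm (phiw A [j] ?u) * norm (TT A [j] ?u) \<le> K j * norm (TT A [j] ?u)"
      by (simp add: mult_right_mono)
    finally have "1 \<le> K j * norm (TT A [j] ?u)" .
    moreover have "norm (TT A [j] ?u) > 0" using TT_single_nonzero[where A=A, OF inv u] by simp
    ultimately have "wlen A d v [j] \<le> log 2 (K j)" unfolding wlen_eq by (intro neg_log_le)
    also have "\<dots> \<le> \<bar>log 2 (K j)\<bar>" by simp
    also have "\<dots> \<le> (\<Sum>i\<in>UNIV. \<bar>log 2 (K i)\<bar>)"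
      by (rule member_le_sum) auto
    finally show ?thesis .
  qed
  then show ?thesis unfolding bdd_above_def by blast
qed

lemma wlen_snoc:
  fixes A :: "'a::finite \<Rightarrow> real^2^2"
  assumes inv: "\<And>j. invertible (A j)" and v: "v \<noteq> 0"
  shows "wlen A d v (w @ [j]) \<le> wlen A d v w + lambda_max A d"
proof -
  let ?u = "perp_unit v"
  have u: "norm ?u = 1" using v by (rule norm_perp_unit)
  define s where "s = TT A w ?u"
  have s0: "s \<noteq> 0" unfolding s_def using TT_nonzero[where A=A, OF inv u] .
  define t where "t = (1 / norm s) *\<^sub>R s"
  have st: "s = norm s *\<^sub>R t" using s0 by (simp add: t_def)
  have nt: "norm t = 1" using s0 by (simp add: t_def)
  define v' where "v' = (vector [t$2, - (t$1)] :: real^2)"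
  have nv': "norm v' = 1" using nt by (simp add: v'_def norm_vec2 add.commute)
  have v'0: "v' \<noteq> 0" using nv' by auto
  have pv': "perp_unit v' = t"
    using nv' by (simp add: vec_eq_iff forall_2 perp_unit_comp v'_def)
  have TT_app: "TT A (w @ [j]) ?u = Finite_Cartesian_Product.transpose (A j) *v s"
    by (simp add: s_def Aw_append matrix_transpose_mul matrix_vector_mul_assoc)
  also have "\<dots> = norm s *\<^sub>R (Finite_Cartesian_Product.transpose (A j) *v t)"
    by (subst st) (rule matrix_vector_mult_scaleR)
  finally have n1: "norm (TT A (w @ [j]) ?u) = norm s * norm (TT A [j] t)"
    by simp
  have tj: "TT A [j] t \<noteq> 0" using TT_single_nonzero[where A=A, OF inv nt] by simp
  have "wlen A d v (w @ [j]) = - log 2 (norm s) + (- log 2 (norm (TT A [j] t)))"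
    unfolding wlen_eq n1 using s0 tj by (simp add: log_mult)
  also have "- log 2 (norm s) = wlen A d v w" by (simp add: wlen_eq s_def)
  also have "- log 2 (norm (TT A [j] t)) = wlen A d v' [j]" by (simp add: wlen_eq pv')
  also have "wlen A d v' [j] \<le> lambda_max A d"
    unfolding lambda_max_def using v'0 by (intro cSup_upper lambda_bdd inv) auto
  finally show ?thesis by simp
qed


section \<open>The coding map\<close>

lemma word_add: "word a (n + m) = word a n @ map a [n..<n+m]"
  unfolding word_def by (subst upt_add_eq_append) simp_all

lemma word_comb_seq: "word (comb_seq n a b) (n + k) = word a n @ word b k"
proof -
  have 1: "map (comb_seq n a b) [0..<n] = map a [0..<n]"
    by (rule map_cong) (auto simp: comb_seq_less)
  have "[n..<n+k] = map (\<lambda>i. i + n) [0..<k]" by (simp add: map_add_upt add.commute)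
  then have 2: "map (comb_seq n a b) [n..<n+k] = map b [0..<k]"
    by (simp add: comb_seq_add)
  show ?thesis unfolding word_add by (simp only: word_def 1 2)
qed

locale IFS =
  fixes A :: "'a::finite \<Rightarrow> real^2^2" and d :: "'a \<Rightarrow> real^2"
  assumes contr: "\<And>j. onorm (\<lambda>x. A j *v x) < 1"
    and inv: "\<And>j. invertible (A j)"
    and inv_disc: "\<And>j. Tmap A d j ` unit_disc \<subseteq> unit_disc"
begin

definition q where "q = Max (range (\<lambda>j. onorm (\<lambda>x. A j *v x)))"

lemma q_ge: "onorm (\<lambda>x. A j *v x) \<le> q"
  unfolding q_def by (rule Max_ge) auto

lemma q_lt: "q < 1"
proof -
  have "q \<in> range (\<lambda>j. onorm (\<lambda>x. A j *v x))" unfolding q_def by (rule Max_in) auto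
  then show ?thesis using contr by auto
qed

lemma q_nonneg: "0 \<le> q"
  using q_ge[of undefined] onorm_pos_le[OF matrix_vector_mul_bounded_linear, of "A undefined"]
  by (simp add: eta_contract_eq)

lemma norm_Aw: "norm (Aw A w *v x) \<le> q ^ length w * norm x"
proof (induction w arbitrary: x)
  case Nil then show ?case by simp
next
  case (Cons j w)
  have "norm (Aw A (j # w) *v x) = norm (A j *v (Aw A w *v x))"
    by (simp add: matrix_vector_mul_assoc)
  also have "\<dots> \<le> onorm (\<lambda>x. A j *v x) * norm (Aw A w *v x)"
    using onorm[OF matrix_vector_mul_bounded_linear, of "A j"] by (simp add: eta_contract_eq)
  also have "\<dots> \<le> q * (q ^ length w * norm x)"
    by (intro mult_mono q_ge Cons q_nonneg) auto
  finally show ?case by simp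
qed

lemma Dw_sub: "Dw A d w \<subseteq> unit_disc"
proof (induction w)
  case Nil then show ?case by (simp add: Dw_def)
next
  case (Cons j w)
  have "Dw A d (j # w) = Tmap A d j ` Dw A d w" by (simp add: Dw_def)
  also have "\<dots> \<subseteq> Tmap A d j ` unit_disc" using Cons by blast
  also have "\<dots> \<subseteq> unit_disc" by (rule inv_disc)
  finally show ?case .
qed

lemma Dw_append_sub: "Dw A d (xs @ ys) \<subseteq> Dw A d xs"
  unfolding Dw_append Dw_eq[of A d xs] using Dw_sub by blast

lemma Dw_word_mono: "m \<le> n \<Longrightarrow> Dw A d (word a n) \<subseteq> Dw A d (word a m)"
  using word_add[of a m "n - m"] Dw_append_sub by (metis le_add_diff_inverse)

lemma Dw_closed: "closed (Dw A d w)"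
proof -
  have "compact (Dw A d w)"
    unfolding Dw_eq unit_disc_def
    by (intro compact_continuous_image compact_cball continuous_intros
        bounded_linear.continuous_on[OF matrix_vector_mul_bounded_linear])
  then show ?thesis by (rule compact_imp_closed)
qed

lemma Dw_ne: "dw A d w \<in> Dw A d w"
proof -
  have "(0::real^2) \<in> unit_disc" by (simp add: unit_disc_def)
  then show ?thesis unfolding Dw_eq by (rule rev_image_eqI) simp
qed

lemma Dw_dist: "x \<in> Dw A d w \<Longrightarrow> y \<in> Dw A d w \<Longrightarrow> dist x y \<le> 2 * q ^ length w"
proof -
  assume "x \<in> Dw A d w" "y \<in> Dw A d w"
  then obtain x' y' where x': "norm x' \<le> 1" "x = Aw A w *v x' + dw A d w"
    and y': "norm y' \<le> 1" "y = Aw A w *v y' + dw A d w"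
    by (auto simp: Dw_eq unit_disc_def)
  have "dist x y = norm (Aw A w *v (x' - y'))"
    by (simp add: x' y' dist_norm matrix_vector_mult_diff_distrib)
  also have "\<dots> \<le> q ^ length w * norm (x' - y')" by (rule norm_Aw)
  also have "\<dots> \<le> q ^ length w * 2"
  proof (rule mult_left_mono)
    show "norm (x' - y') \<le> 2" using norm_triangle_ineq4[of x' y'] x' y' by simp
  qed (simp add: q_nonneg)
  finally show ?thesis by simp
qed

lemma q_pow_small: "e > 0 \<Longrightarrow> \<exists>n. 2 * q ^ n < e"
proof -
  assume e: "e > 0"
  have "(\<lambda>n. q ^ n) \<longlonglongrightarrow> 0" using q_lt q_nonneg by (intro LIMSEQ_power_zero) simp
  from order_tendstoD(2)[OF this, of "e/2"] e obtain n where "q ^ n < e / 2"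
    by (auto simp: eventually_sequentially)
  then have "2 * q ^ n < e" by simp
  then show ?thesis ..
qed

lemma coding_sing: "\<exists>c. (\<Inter>n. Dw A d (word a n)) = {c}"
proof (rule decreasing_closed_nest_sing)
  show "\<And>n. closed (Dw A d (word a n))" by (rule Dw_closed)
  show "\<And>n. Dw A d (word a n) \<noteq> {}" using Dw_ne by blast
  show "\<And>m n. m \<le> n \<Longrightarrow> Dw A d (word a n) \<subseteq> Dw A d (word a m)" by (rule Dw_word_mono)
  fix e :: real assume "e > 0"
  then obtain n where n: "2 * q ^ n < e" using q_pow_small by blast
  have "\<forall>x\<in>Dw A d (word a n). \<forall>y\<in>Dw A d (word a n). dist x y < e"
    using Dw_dist[of _ "word a n"] n by (fastforce simp: word_def)
  then show "\<exists>n. \<forall>x\<in>Dw A d (word a n). \<forall>y\<in>Dw A d (word a n). dist x y < e" by blast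
qed

lemma coding_in: "coding A d a \<in> Dw A d (word a n)"
proof -
  obtain c where c: "(\<Inter>n. Dw A d (word a n)) = {c}" using coding_sing by blast
  have "coding A d a = c" unfolding coding_def c by simp
  then show ?thesis using c by blast
qed

lemma coding_unique: "(\<And>n. x \<in> Dw A d (word a n)) \<Longrightarrow> x = coding A d a"
proof -
  assume x: "\<And>n. x \<in> Dw A d (word a n)"
  obtain c where c: "(\<Inter>n. Dw A d (word a n)) = {c}" using coding_sing by blast
  have "coding A d a = c" unfolding coding_def c by simp
  moreover have "x \<in> (\<Inter>n. Dw A d (word a n))" using x by blast
  ultimately show ?thesis using c by blast
qed

lemma coding_disc: "coding A d a \<in> unit_disc"
  using coding_in[of a 0] by (simp add: word_def Dw_def)

lemma coding_comb_seq:
  "coding A d (comb_seq n a b) = Aw A (word a n) *v coding A d b + dw A d (word a n)"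
proof (rule coding_unique[symmetric])
  fix m
  let ?y = "Aw A (word a n) *v coding A d b + dw A d (word a n)"
  have *: "?y \<in> Dw A d (word (comb_seq n a b) (n + k))" for k
    unfolding word_comb_seq Dw_append using coding_in[of b k] by blast
  show "?y \<in> Dw A d (word (comb_seq n a b) m)"
  proof (cases "m \<le> n")
    case True
    then show ?thesis using *[of 0] Dw_word_mono[OF True, of "comb_seq n a b"] by auto
  next
    case False
    then show ?thesis using *[of "m - n"] by simp
  qed
qed

end


lemma space_bernoulli[simp]: "space (bernoulli p) = UNIV"
  by (simp add: bernoulli_def space_PiM)

lemma length_word[simp]: "length (word a n) = n"
  by (simp add: word_def)

lemma cylinder_word: "cylinder (word a n) = {b. \<forall>i<n. b i = a i}"
  by (simp add: cylinder_def word_def)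

lemma sets_Collect_prefix:
  "{x. \<forall>i<n. x i = l i} \<in> sets (bernoulli p)"
proof -
  have "{x \<in> space (bernoulli p). \<forall>i<n. x i = l i} \<in> sets (bernoulli p)"
    unfolding bernoulli_def by measurable
  then show ?thesis by simp
qed

lemma word_measurable:
  fixes p :: "'a::countable pmf"
  shows "(\<lambda>x. word x n) \<in> measurable (bernoulli p) (count_space UNIV)"
proof (subst measurable_count_space_eq2_countable, intro conjI ballI)
  fix l :: "'a list"
  have w: "word x n = l \<longleftrightarrow> length l = n \<and> (\<forall>i<n. x i = l!i)" for x
    unfolding word_def list_eq_iff_nth_eq by auto
  have "(\<lambda>x. word x n) -` {l} \<inter> space (bernoulli p) =
        (if length l = n then {x. \<forall>i<n. x i = l ! i} else {})"
    using w by auto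
  then show "(\<lambda>x. word x n) -` {l} \<inter> space (bernoulli p) \<in> sets (bernoulli p)"
    using sets_Collect_prefix[of n "\<lambda>i. l ! i" p] by simp
qed simp

context IFS
begin

lemma coding_measurable: "coding A d \<in> borel_measurable (bernoulli p)"
proof (rule borel_measurable_LIMSEQ_metric)
  fix n
  show "(\<lambda>x. dw A d (word x n)) \<in> borel_measurable (bernoulli p)"
    by (rule measurable_compose[OF word_measurable]) simp
next
  fix x :: "nat \<Rightarrow> 'a"
  have "(\<lambda>n. dist (dw A d (word x n)) (coding A d x)) \<longlonglongrightarrow> 0"
  proof (rule Lim_null_comparison)
    show "\<forall>\<^sub>F n in sequentially. norm (dist (dw A d (word x n)) (coding A d x)) \<le> 2 * q ^ n"
    proof (rule always_eventually, rule allI)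
      fix n
      have "dist (dw A d (word x n)) (coding A d x) \<le> 2 * q ^ length (word x n)"
        by (rule Dw_dist[OF Dw_ne coding_in])
      then show "norm (dist (dw A d (word x n)) (coding A d x)) \<le> 2 * q ^ n"
        by (simp add: length_word)
    qed
    show "(\<lambda>n. 2 * q ^ n) \<longlonglongrightarrow> 0"
      using q_lt q_nonneg by (intro tendsto_mult_right_zero LIMSEQ_power_zero) simp
  qed
  then show "(\<lambda>n. dw A d (word x n)) \<longlonglongrightarrow> coding A d x"
    using tendsto_dist_iff by blast
qed

lemma proj_coding_measurable: "(\<lambda>x. proj v (coding A d x)) \<in> borel_measurable (bernoulli p)"
  unfolding proj_def
  by (rule borel_measurable_inner[OF coding_measurable]) simp

end


section \<open>Cylinders and the shift\<close>

context sequence_space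
begin

lemma uniform_prefix:
  assumes C_def: "C = {b. \<forall>i<n. b i = a i}"
    and CS: "C \<in> sets S" and C0: "emeasure S C \<noteq> 0"
    and aS: "a \<in> space S"
  shows "uniform_measure S C = distr S S (comb_seq n a)"
proof (rule measure_eqI)
  show "sets (uniform_measure S C) = sets (distr S S (comb_seq n a))" by simp
  have fm: "comb_seq n a \<in> measurable S S"
    using aS by measurable
  fix X assume X: "X \<in> sets (uniform_measure S C)"
  then have XS: "X \<in> sets S" by simp
  let ?Y = "comb_seq n a -` X \<inter> space S"
  have YS: "?Y \<in> sets S" using fm XS by measurable
  have eq: "(\<lambda>(\<omega>, \<omega>'). comb_seq n \<omega> \<omega>') -` (C \<inter> X) \<inter> space (S \<Otimes>\<^sub>M S) = C \<times> ?Y"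
  proof -
    have *: "\<omega> \<in> C \<Longrightarrow> comb_seq n \<omega> \<omega>' = comb_seq n a \<omega>'" for \<omega> \<omega>'
      by (auto simp: C_def comb_seq_def)
    have **: "comb_seq n \<omega> \<omega>' \<in> C \<longleftrightarrow> \<omega> \<in> C" for \<omega> \<omega>'
      by (auto simp: C_def comb_seq_less)
    have aC: "a \<in> C" by (simp add: C_def)
    have Csp: "C \<subseteq> space S" using CS by (rule sets.sets_into_space)
    show ?thesis
    proof (intro set_eqI iffI)
      fix z assume z: "z \<in> (\<lambda>(\<omega>, \<omega>'). comb_seq n \<omega> \<omega>') -` (C \<inter> X) \<inter> space (S \<Otimes>\<^sub>M S)"
      obtain \<omega> \<omega>' where zz: "z = (\<omega>, \<omega>')" by (cases z)
      have 1: "comb_seq n \<omega> \<omega>' \<in> C" "comb_seq n \<omega> \<omega>' \<in> X" "\<omega>' \<in> space S"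
        using z unfolding zz space_pair_measure by auto
      have 2: "\<omega> \<in> C" using 1(1) ** by blast
      have 3: "comb_seq n a \<omega>' \<in> X" using 1(2) *[OF 2] by simp
      show "z \<in> C \<times> ?Y" unfolding zz using 2 3 1(3) by blast
    next
      fix z assume z: "z \<in> C \<times> ?Y"
      obtain \<omega> \<omega>' where zz: "z = (\<omega>, \<omega>')" by (cases z)
      have 1: "\<omega> \<in> C" "comb_seq n a \<omega>' \<in> X" "\<omega>' \<in> space S"
        using z unfolding zz by auto
      have 2: "comb_seq n \<omega> \<omega>' \<in> C" using 1(1) ** by blast
      have 3: "comb_seq n \<omega> \<omega>' \<in> X" using 1(2) *[OF 1(1)] by simp
      have 4: "(\<omega>, \<omega>') \<in> space (S \<Otimes>\<^sub>M S)"
        using 1(1,3) Csp unfolding space_pair_measure by blast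
      show "z \<in> (\<lambda>(\<omega>, \<omega>'). comb_seq n \<omega> \<omega>') -` (C \<inter> X) \<inter> space (S \<Otimes>\<^sub>M S)"
        unfolding zz using 2 3 4 by simp
    qed
  qed
  have "emeasure S (C \<inter> X) = emeasure (distr (S \<Otimes>\<^sub>M S) S (\<lambda>(\<omega>, \<omega>'). comb_seq n \<omega> \<omega>')) (C \<inter> X)"
    by (rule arg_cong[where f="\<lambda>M. emeasure M (C \<inter> X)", OF PiM_comb_seq[symmetric]])
  also have "\<dots> = emeasure (S \<Otimes>\<^sub>M S) (C \<times> ?Y)"
    unfolding eq[symmetric] by (rule emeasure_distr[OF measurable_comb_seq]) (intro sets.Int CS XS)
  also have "\<dots> = emeasure S C * emeasure S ?Y"
    using CS YS by (intro P.emeasure_pair_measure_Times)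
  also have "\<dots> = emeasure S ?Y * emeasure S C" by (rule mult.commute)
  finally have e: "emeasure S (C \<inter> X) = emeasure S ?Y * emeasure S C" .
  have Ctop: "emeasure S C \<noteq> top" by (rule P.emeasure_finite)
  have "emeasure (uniform_measure S C) X = emeasure S (C \<inter> X) / emeasure S C"
    by (rule emeasure_uniform_measure[OF CS XS])
  also have "\<dots> = emeasure S ?Y" unfolding e by (rule ennreal_mult_divide_eq[OF C0 Ctop])
  also have "\<dots> = emeasure (distr S S (comb_seq n a)) X"
    by (rule emeasure_distr[OF fm XS, symmetric])
  finally show "emeasure (uniform_measure S C) X = emeasure (distr S S (comb_seq n a)) X" .
qed

end

lemma bernoulli_seq: "sequence_space (measure_pmf p)"
  unfolding sequence_space_def product_prob_space_def product_prob_space_axioms_def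
    product_sigma_finite_def
  by (simp add: prob_space_measure_pmf prob_space_imp_sigma_finite)

lemma uniform_cylinder:
  assumes supp: "set_pmf p = UNIV"
  shows "uniform_measure (bernoulli p) (cylinder (word a n)) =
         distr (bernoulli p) (bernoulli p) (comb_seq n a)"
proof -
  interpret sequence_space "measure_pmf p" by (rule bernoulli_seq)
  have B: "bernoulli p = S" by (simp add: bernoulli_def)
  let ?C = "{b. \<forall>i<n. b i = a i}"
  have CS: "?C \<in> sets S" using sets_Collect_prefix[of n a p] by (simp add: B)
  have Cemb: "?C = prod_emb UNIV (\<lambda>i. measure_pmf p) {..<n} (\<Pi>\<^sub>E i\<in>{..<n}. {a i})"
    unfolding prod_emb_def set_eq_iff PiE_iff by auto
  have "emeasure S ?C = (\<Prod>i\<in>{..<n}. emeasure (measure_pmf p) {a i})"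
    unfolding Cemb by (rule emeasure_PiM_emb) auto
  also have "\<dots> = (\<Prod>i\<in>{..<n}. ennreal (pmf p (a i)))"
    by (simp add: emeasure_pmf_single)
  also have "\<dots> \<noteq> 0"
  proof -
    have h: "pmf p (a i) \<noteq> 0" for i using supp by (simp add: set_pmf_iff[symmetric])
    show ?thesis using h by simp
  qed
  finally have C0: "emeasure S ?C \<noteq> 0" .
  show ?thesis unfolding B cylinder_word
    by (rule uniform_prefix[OF refl CS C0]) (simp add: space_PiM)
qed


section \<open>Entropy-type integrals\<close>

lemma ball_measure_measurable:
  fixes \<nu> :: "real measure"
  assumes fin: "finite_measure \<nu>" and S: "sets \<nu> = sets borel"
  shows "(\<lambda>x. measure \<nu> (ball x r)) \<in> borel_measurable borel"
proof -
  interpret finite_measure \<nu> by (rule fin)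
  let ?Q = "{z::real \<times> real. dist (fst z) (snd z) < r}"
  have "open ?Q"
    by (rule open_Collect_less) (intro continuous_intros)+
  then have "?Q \<in> sets (borel :: (real \<times> real) measure)" by simp
  also have "sets (borel :: (real \<times> real) measure) = sets (borel \<Otimes>\<^sub>M borel)"
    by (subst borel_prod) (rule refl)
  also have "\<dots> = sets (borel \<Otimes>\<^sub>M \<nu>)"
    using S by (intro sets_pair_measure_cong) simp_all
  finally have Q: "?Q \<in> sets (borel \<Otimes>\<^sub>M \<nu>)" .
  have "(\<lambda>x. emeasure \<nu> (Pair x -` ?Q)) \<in> borel_measurable borel"
    by (rule measurable_emeasure_Pair[OF Q])
  moreover have "Pair x -` ?Q = ball x r" for x by (auto simp: ball_def)
  ultimately have "(\<lambda>x. emeasure \<nu> (ball x r)) \<in> borel_measurable borel" by simp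
  then have "(\<lambda>x. enn2real (emeasure \<nu> (ball x r))) \<in> borel_measurable borel"
    by (rule borel_measurable_enn2real)
  then show ?thesis by (simp add: measure_def)
qed

lemma ln_ball_measure_measurable:
  fixes \<nu> :: "real measure"
  assumes fin: "finite_measure \<nu>" and S: "sets \<nu> = sets borel"
  shows "(\<lambda>x. ln (measure \<nu> (ball x r))) \<in> borel_measurable borel"
  using ball_measure_measurable[OF fin S, of r] by measurable

lemma H_scale:
  fixes \<nu> :: "real measure" and \<kappa> c r :: real
  assumes P: "prob_space \<nu>" and S: "sets \<nu> = sets borel" and k: "\<kappa> \<noteq> 0"
  shows "Hr r (distr \<nu> borel (\<lambda>y. \<kappa> * y + c)) = Hr (r / \<bar>\<kappa>\<bar>) \<nu>"
proof -
  let ?h = "\<lambda>y. \<kappa> * y + c"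
  let ?D = "distr \<nu> borel ?h"
  have sp: "space \<nu> = UNIV" using sets_eq_imp_space_eq[OF S] by simp
  have "?h \<in> borel_measurable borel" by measurable
  then have hm: "?h \<in> borel_measurable \<nu>"
    by (subst measurable_cong_sets[OF S refl])
  have PD: "prob_space ?D" using P hm by (intro prob_space.prob_space_distr) auto
  have fD: "finite_measure ?D" using PD by (rule prob_space.finite_measure)
  have gm: "(\<lambda>x. ln (measure ?D (ball x r))) \<in> borel_measurable borel"
    by (rule ln_ball_measure_measurable[OF fD]) simp
  have pre: "?h -` ball (?h y) r \<inter> space \<nu> = ball y (r / \<bar>\<kappa>\<bar>)" for y
  proof -
    have "dist (?h y) (?h z) < r \<longleftrightarrow> dist y z < r / \<bar>\<kappa>\<bar>" for z
    proof -
      have "dist (?h y) (?h z) = \<bar>\<kappa>\<bar> * dist y z"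
        by (simp add: dist_real_def abs_mult[symmetric] right_diff_distrib)
      then show ?thesis using k by (simp add: pos_less_divide_eq mult.commute)
    qed
    then show ?thesis by (auto simp: sp ball_def)
  qed
  have mD: "measure ?D (ball (?h y) r) = measure \<nu> (ball y (r / \<bar>\<kappa>\<bar>))" for y
    by (subst measure_distr[OF hm]) (simp_all add: pre)
  have "(\<integral>x. ln (measure ?D (ball x r)) \<partial>?D) = (\<integral>y. ln (measure ?D (ball (?h y) r)) \<partial>\<nu>)"
    by (rule integral_distr[OF hm gm])
  also have "\<dots> = (\<integral>y. ln (measure \<nu> (ball y (r / \<bar>\<kappa>\<bar>))) \<partial>\<nu>)"
    by (simp add: mD)
  finally show ?thesis by (simp add: Hr_def)
qed


lemma H_int_AE:
  fixes \<nu> :: "real measure" and r :: real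
  assumes P: "prob_space \<nu>" and S: "sets \<nu> = sets borel"
    and bnd: "AE x in \<nu>. x \<in> {-1..1}" and r: "r > 0"
  shows "integrable \<nu> (\<lambda>x. ln (measure \<nu> (ball x r)))"
    and "AE x in \<nu>. measure \<nu> (ball x r) > 0"
proof -
  interpret prob_space \<nu> by (rule P)
  have sp: "space \<nu> = UNIV" using sets_eq_imp_space_eq[OF S] by simp
  define I where "I k = {real_of_int k * r ..< (real_of_int k + 1) * r}" for k :: int
  define g where "g x = \<lfloor>x / r\<rfloor>" for x :: real
  have Isets: "I k \<in> sets \<nu>" for k unfolding I_def S by simp
  have ballsets: "ball x e \<in> sets \<nu>" for x e unfolding S by simp
  have mem: "x \<in> I (g x)" for x
  proof -
    have "real_of_int \<lfloor>x / r\<rfloor> \<le> x / r" "x / r < real_of_int \<lfloor>x / r\<rfloor> + 1"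
      by linarith+
    then have "real_of_int \<lfloor>x / r\<rfloor> * r \<le> x" "x < (real_of_int \<lfloor>x / r\<rfloor> + 1) * r"
      using r by (simp_all only: pos_le_divide_eq pos_divide_less_eq)
    then show ?thesis by (simp add: I_def g_def)
  qed
  have sub: "I (g x) \<subseteq> ball x r" for x
  proof
    fix y assume y: "y \<in> I (g x)"
    have "x \<in> I (g x)" by (rule mem)
    then show "y \<in> ball x r" using y by (auto simp: I_def ball_def dist_real_def algebra_simps)
  qed
  define K where "K = {\<lfloor>-1 / r\<rfloor> .. \<lfloor>1 / r\<rfloor>}"
  have finK: "finite K" by (simp add: K_def)
  have gK: "x \<in> {-1..1} \<Longrightarrow> g x \<in> K" for x
  proof -
    assume x: "x \<in> {-1..1}"
    have "-(1 / r) \<le> x / r" using x r divide_right_mono[of "-1" x r] by simp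
    moreover have "x / r \<le> 1 / r" using x r divide_right_mono[of x 1 r] by simp
    ultimately show ?thesis unfolding K_def g_def by (auto intro!: floor_mono)
  qed
  define Z where "Z = {k \<in> K. measure \<nu> (I k) = 0}"
  have "(\<Union>k\<in>Z. I k) \<in> null_sets \<nu>"
  proof (rule null_sets_UN')
    show "countable Z" by (rule countable_finite) (simp add: Z_def finK)
    fix k assume "k \<in> Z"
    then have "measure \<nu> (I k) = 0" by (simp add: Z_def)
    then show "I k \<in> null_sets \<nu>" using Isets by (simp add: emeasure_eq_measure null_sets_def)
  qed
  then have AEN: "AE x in \<nu>. x \<notin> (\<Union>k\<in>Z. I k)" by (rule AE_not_in)
  define C where "C = (\<Sum>k\<in>K. \<bar>ln (measure \<nu> (I k))\<bar>)"
  have good: "AE x in \<nu>. g x \<in> K \<and> measure \<nu> (I (g x)) > 0"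
    using AEN bnd
  proof eventually_elim
    case (elim x)
    then have gx: "g x \<in> K" by (intro gK)
    have "measure \<nu> (I (g x)) \<noteq> 0"
    proof
      assume "measure \<nu> (I (g x)) = 0"
      then have "g x \<in> Z" using gx by (simp add: Z_def)
      then show False using elim(1) mem[of x] by blast
    qed
    moreover have "0 \<le> measure \<nu> (I (g x))" by (rule measure_nonneg)
    ultimately show ?case using gx by (simp add: order_less_le)
  qed
  have pos: "AE x in \<nu>. measure \<nu> (ball x r) \<ge> measure \<nu> (I (g x)) \<and> measure \<nu> (I (g x)) > 0 \<and> g x \<in> K"
    using good
  proof eventually_elim
    case (elim x)
    have "measure \<nu> (I (g x)) \<le> measure \<nu> (ball x r)"
      by (rule finite_measure_mono[OF sub ballsets])
    then show ?case using elim by simp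
  qed
  then show "AE x in \<nu>. measure \<nu> (ball x r) > 0" by eventually_elim auto
  have "AE x in \<nu>. norm (ln (measure \<nu> (ball x r))) \<le> C"
    using pos
  proof eventually_elim
    case (elim x)
    let ?b = "measure \<nu> (ball x r)" and ?m = "measure \<nu> (I (g x))"
    have b0: "?b > 0" using elim by linarith
    have "?b \<le> 1" by (rule prob_le_1)
    then have up: "ln ?b \<le> 0" using b0 by simp
    have "ln ?m \<le> ln ?b" using elim b0 by simp
    moreover have "\<bar>ln ?m\<bar> \<le> C"
      unfolding C_def using elim finK by (intro member_le_sum) auto
    ultimately show ?case using up by simp
  qed
  moreover have "(\<lambda>x. ln (measure \<nu> (ball x r))) \<in> borel_measurable \<nu>"
    using ln_ball_measure_measurable[OF finite_measure_axioms S, of r]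
    by (subst measurable_cong_sets[OF S refl])
  ultimately show "integrable \<nu> (\<lambda>x. ln (measure \<nu> (ball x r)))"
    by (rule integrable_const_bound)
qed

lemma H_mono:
  fixes \<nu> :: "real measure" and r r' :: real
  assumes P: "prob_space \<nu>" and S: "sets \<nu> = sets borel"
    and bnd: "AE x in \<nu>. x \<in> {-1..1}" and r: "r > 0" and rr: "r \<le> r'"
  shows "Hr r' \<nu> \<le> Hr r \<nu>"
proof -
  interpret prob_space \<nu> by (rule P)
  have r': "r' > 0" using r rr by simp
  have ballsets: "ball x e \<in> sets \<nu>" for x e unfolding S by simp
  have "(\<integral>x. ln (measure \<nu> (ball x r)) \<partial>\<nu>) \<le> (\<integral>x. ln (measure \<nu> (ball x r')) \<partial>\<nu>)"
  proof (rule integral_mono_AE)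
    show "integrable \<nu> (\<lambda>x. ln (measure \<nu> (ball x r)))" by (rule H_int_AE(1)[OF P S bnd r])
    show "integrable \<nu> (\<lambda>x. ln (measure \<nu> (ball x r')))" by (rule H_int_AE(1)[OF P S bnd r'])
    show "AE x in \<nu>. ln (measure \<nu> (ball x r)) \<le> ln (measure \<nu> (ball x r'))"
      using H_int_AE(2)[OF P S bnd r]
    proof eventually_elim
      case (elim x)
      have "measure \<nu> (ball x r) \<le> measure \<nu> (ball x r')"
        by (rule finite_measure_mono[OF subset_ball[OF rr] ballsets])
      then show ?case using elim by simp
    qed
  qed
  then show ?thesis by (simp add: Hr_def)
qed


section \<open>The index n_i\<close>

context IFS
begin

lemma norm_TT_le:
  assumes u: "norm u = 1"
  shows "norm (TT A w u) \<le> q ^ length w"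
proof (cases "TT A w u = 0")
  case True then show ?thesis using q_nonneg by simp
next
  case False
  let ?y = "TT A w u"
  have "norm ?y * norm ?y = ?y \<bullet> ?y" by (simp add: power2_norm_eq_inner[symmetric] power2_eq_square)
  also have "\<dots> = (Aw A w *v ?y) \<bullet> u" by (simp add: inner_mv_transpose)
  also have "\<dots> \<le> norm (Aw A w *v ?y) * norm u" by (rule norm_cauchy_schwarz)
  also have "\<dots> \<le> q ^ length w * norm ?y" using u norm_Aw by simp
  finally have "norm ?y * norm ?y \<le> q ^ length w * norm ?y" .
  then show ?thesis using False by simp
qed

lemma wlen_unbounded:
  assumes v: "v \<noteq> 0"
  shows "\<exists>n. t \<le> wlen A d v (word a n)"
proof -
  let ?u = "perp_unit v"
  have u: "norm ?u = 1" using v by (rule norm_perp_unit)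
  have "(\<lambda>n. q ^ n) \<longlonglongrightarrow> 0" using q_lt q_nonneg by (intro LIMSEQ_power_zero) simp
  from order_tendstoD(2)[OF this, of "2 powr (- t)"] obtain n where n: "q ^ n < 2 powr (- t)"
    by (auto simp: eventually_sequentially)
  let ?y = "TT A (word a n) ?u"
  have y0: "norm ?y > 0" using TT_nonzero[where A=A, OF inv u] by simp
  have "norm ?y < 2 powr (- t)" using norm_TT_le[OF u, of "word a n"] n by simp
  then have "log 2 (norm ?y) < log 2 (2 powr (- t))"
    by (subst log_less_cancel_iff) (use y0 in auto)
  then have "log 2 (norm ?y) < - t" by (simp add: log_powr_cancel)
  then have "t \<le> wlen A d v (word a n)" by (simp add: wlen_eq)
  then show ?thesis ..
qed

lemma nidx_props:
  assumes v: "v \<noteq> 0" and pos: "real (N * i) > 0"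
  obtains m where "nidx A d a N v i = Suc m"
    and "wlen A d v (word a m) < real (N * i)"
    and "real (N * i) \<le> wlen A d v (word a (nidx A d a N v i))"
proof -
  let ?P = "\<lambda>n. real (N * i) \<le> wlen A d v (word a n)"
  have ex: "\<exists>n. ?P n" by (rule wlen_unbounded[OF v])
  have P1: "?P (nidx A d a N v i)" unfolding nidx_def by (rule LeastI_ex[OF ex])
  have u: "norm (perp_unit v) = 1" using v by (rule norm_perp_unit)
  have w0: "wlen A d v (word a 0) = 0"
    using u by (simp add: wlen_eq word_def transpose_mat matrix_vector_mul_lid)
  have "nidx A d a N v i \<noteq> 0"
  proof
    assume "nidx A d a N v i = 0"
    then have "real (N * i) \<le> 0" using P1 w0 by simp
    then show False using pos by linarith
  qed
  then obtain m where m: "nidx A d a N v i = Suc m" by (cases "nidx A d a N v i") auto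
  have "\<not> ?P m" unfolding nidx_def
    by (rule not_less_Least) (use m in \<open>simp add: nidx_def\<close>)
  then show ?thesis using that m P1 by simp
qed

end

theorem lemma4p4:
  fixes A :: "'a::finite \<Rightarrow> real^2^2" and d :: "'a \<Rightarrow> real^2" and p :: "'a pmf"
    and a :: "nat \<Rightarrow> 'a" and i N :: nat and v :: "real^2"
  assumes pos: "\<And>j r c. A j $ r $ c > 0"
    and contr: "\<And>j. onorm (\<lambda>x. A j *v x) < 1"
    and inv: "\<And>j. invertible (A j)"
    and inv_disc: "\<And>j. Tmap A d j ` unit_disc \<subseteq> unit_disc"
    and supp: "set_pmf p = UNIV"
    and i: "i \<ge> 1" and N: "N \<ge> 1"
    and v: "v \<noteq> 0"
  shows "Hr (2 powr (- real ((i + 1) * N)))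
           (proj_meas A d v (uniform_measure (bernoulli p) (cylinder (word a (nidx A d a N v i)))))
         \<ge> Hr (2 powr lambda_max A d * 2 powr (- real N))
           (proj_meas A d (phiw A (word a (nidx A d a N v i)) v) (bernoulli p))"
proof -
  interpret IFS A d using contr inv inv_disc by unfold_locales
  interpret B: sequence_space "measure_pmf p" by (rule bernoulli_seq)
  have Bdef: "bernoulli p = B.S" by (simp add: bernoulli_def)
  have PB: "prob_space (bernoulli p)" unfolding Bdef by (rule B.P.prob_space_axioms)
  define n where "n = nidx A d a N v i"
  define w where "w = word a n"
  define lam where "lam = lambda_max A d"
  have Ni: "real (N * i) > 0" using i N by simp
  obtain m where m: "n = Suc m" "wlen A d v (word a m) < real (N * i)"
    and W1: "real (N * i) \<le> wlen A d v w"
    using nidx_props[OF v Ni] unfolding n_def w_def by blast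
  have wm: "w = word a m @ [a m]" by (simp add: w_def m word_def)
  have Wlt: "wlen A d v w < real (N * i) + lam"
    using wlen_snoc[where A=A and d=d and w="word a m" and j="a m", OF inv v] m(2) unfolding wm lam_def by simp
  let ?u = "perp_unit v"
  have u: "norm ?u = 1" using v by (rule norm_perp_unit)
  define z where "z = phiw A w v"
  have Az: "Aw A w *v z = v" unfolding z_def by (rule Aw_phiw[where A=A, OF inv])
  have z0: "z \<noteq> 0" using Az v by auto
  define y where "y = TT A w ?u"
  have y0: "y \<noteq> 0" unfolding y_def by (rule TT_nonzero[where A=A, OF inv u])
  have yz: "y \<bullet> z = 0"
  proof -
    have "y \<bullet> z = z \<bullet> y" by (rule inner_commute)
    also have "\<dots> = (Aw A w *v z) \<bullet> ?u" unfolding y_def by (rule inner_mv_transpose[symmetric])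
    also have "\<dots> = 0" unfolding Az using perp_unit_orth[of v] by (simp only: inner_commute)
    finally show ?thesis .
  qed
  define \<kappa> where "\<kappa> = y \<bullet> perp_unit z"
  have yk: "y = \<kappa> *\<^sub>R perp_unit z" unfolding \<kappa>_def by (rule orth_2d[OF z0 yz])
  have nk: "norm y = \<bar>\<kappa>\<bar>" using norm_perp_unit[OF z0] by (subst yk) simp
  have k0: "\<kappa> \<noteq> 0" using y0 nk by auto
  define c0 where "c0 = dw A d w \<bullet> ?u"
  define F where "F = (\<lambda>b. proj v (coding A d b))"
  define G where "G = (\<lambda>b. proj z (coding A d b))"
  define h where "h = (\<lambda>t. \<kappa> * t + c0)"
  have Feq: "F (comb_seq n a b) = h (G b)" for b
  proof -
    have "F (comb_seq n a b) = coding A d b \<bullet> y + c0"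
      unfolding F_def coding_comb_seq proj_affine y_def c0_def w_def ..
    also have "\<dots> = h (G b)"
      unfolding h_def G_def yk proj_def by simp
    finally show ?thesis .
  qed
  have Fm: "F \<in> borel_measurable (bernoulli p)" unfolding F_def by (rule proj_coding_measurable)
  have Gm: "G \<in> borel_measurable (bernoulli p)" unfolding G_def by (rule proj_coding_measurable)
  have hm: "h \<in> borel_measurable borel" unfolding h_def by measurable
  have cm: "comb_seq n a \<in> measurable (bernoulli p) (bernoulli p)"
    unfolding bernoulli_def
    by (rule measurable_comb_seq'[OF measurable_const measurable_ident_sets[OF refl]])
      (simp add: space_PiM)
  define \<nu> where "\<nu> = proj_meas A d z (bernoulli p)"
  have \<nu>G: "\<nu> = distr (bernoulli p) borel G" by (simp add: \<nu>_def proj_meas_def G_def)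
  have Pnu: "prob_space \<nu>" unfolding \<nu>G using PB Gm by (intro prob_space.prob_space_distr) auto
  have Snu: "sets \<nu> = sets borel" by (simp add: \<nu>G)
  have bnd: "AE x in \<nu>. x \<in> {-1..1}"
  proof -
    have "\<bar>G b\<bar> \<le> 1" for b
    proof -
      have "\<bar>G b\<bar> \<le> norm (coding A d b) * norm (perp_unit z)"
        unfolding G_def proj_def by (rule Cauchy_Schwarz_ineq2)
      also have "\<dots> \<le> 1" using coding_disc[of b] norm_perp_unit[OF z0]
        by (simp add: unit_disc_def)
      finally show ?thesis .
    qed
    then have "AE b in bernoulli p. G b \<in> {-1..1}" by (auto simp: abs_le_iff)
    then show ?thesis unfolding \<nu>G by (subst AE_distr_iff[OF Gm]) simp_all
  qed
  have LHS: "proj_meas A d v (uniform_measure (bernoulli p) (cylinder w)) = distr \<nu> borel h"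
  proof -
    have "proj_meas A d v (uniform_measure (bernoulli p) (cylinder w))
          = distr (distr (bernoulli p) (bernoulli p) (comb_seq n a)) borel F"
      unfolding proj_meas_def w_def uniform_cylinder[OF supp] F_def ..
    also have "\<dots> = distr (bernoulli p) borel (F \<circ> comb_seq n a)"
      by (rule distr_distr[OF Fm cm])
    also have "F \<circ> comb_seq n a = h \<circ> G" using Feq by (simp add: fun_eq_iff)
    also have "distr (bernoulli p) borel (h \<circ> G) = distr \<nu> borel h"
      unfolding \<nu>G by (rule distr_distr[OF hm Gm, symmetric])
    finally show ?thesis .
  qed
  define r1 where "r1 = 2 powr (- real ((i + 1) * N))"
  have r1pos: "r1 > 0" by (simp add: r1_def)
  have Hl: "Hr r1 (distr \<nu> borel h) = Hr (r1 / \<bar>\<kappa>\<bar>) \<nu>"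
    unfolding h_def by (rule H_scale[OF Pnu Snu k0])
  have ny: "norm y = 2 powr (- wlen A d v w)"
    using y0 by (simp add: wlen_eq y_def)
  have rle: "r1 / \<bar>\<kappa>\<bar> \<le> 2 powr lam * 2 powr (- real N)"
  proof -
    have "r1 / \<bar>\<kappa>\<bar> = 2 powr (wlen A d v w - real ((i + 1) * N))"
      unfolding nk[symmetric] ny r1_def by (simp add: powr_minus_divide powr_add[symmetric] powr_diff)
    also have "\<dots> \<le> 2 powr (lam + - real N)"
    proof (rule powr_mono)
      show "wlen A d v w - real ((i + 1) * N) \<le> lam + - real N"
        using Wlt by (simp add: algebra_simps)
    qed simp
    also have "\<dots> = 2 powr lam * 2 powr (- real N)" by (rule powr_add)
    finally show ?thesis .
  qed
  have "Hr (2 powr lam * 2 powr (- real N)) \<nu> \<le> Hr (r1 / \<bar>\<kappa>\<bar>) \<nu>"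
    by (rule H_mono[OF Pnu Snu bnd _ rle]) (use r1pos k0 in simp)
  then show ?thesis
    using LHS Hl unfolding r1_def lam_def \<nu>_def z_def w_def n_def by simp
qed

end
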